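(* For every pure three-qubit state $|\phi_{ABC}\rangle$, $$S^{\max}_{total}(|\phi_{ABC}\rangle)+3\,E_W(|\phi_{ABC}\rangle)\le\frac{10}{3},$$ where $S^{\max}_{total}=\max\{S_{AB}+S_{AC},\,S_{AB}+S_{BC},\,S_{AC}+S_{BC}\}$ and $E_W=\min\{\mathcal C_{AB}^2,\mathcal C_{AC}^2,\mathcal C_{BC}^2\}$.
   Context: For a two-qubit state $\rho$ let $t_{kl}=\mathrm{Tr}[\rho\,\sigma_k\otimes\sigma_l]$ ($\sigma_k$ Pauli matrices) and $S(\rho)=\sum_{k,l=1}^3 t_{kl}^2$; $\rho_{ij}$ are the two-qubit reduced states of $|\phi_{ABC}\rangle$ and $S_{ij}=S(\rho_{ij})$. $\mathcal C_{ij}$ is the Wootters concurrence of $\rho_{ij}$: $\mathcal C(\rho)=\max\{0,\lambda_1-\lambda_2-\lambda_3-\lambda_4\}$, with $\lambda_1\ge\dots\ge\lambda_4$ the square roots of the eigenvalues of $\rho(\sigma_2\otimes\sigma_2)\rho^*(\sigma_2\otimes\sigma_2)$. *)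

theory Defs
  imports "Jordan_Normal_Form.Char_Poly" "HOL-Library.Multiset"
begin

text \<open>Three-qubit pure states are unit vectors in C^8, basis index 4*a + 2*b + c
  for qubit values a (A), b (B), c (C). Two-qubit states are 4x4 complex matrices
  with basis index 2*x + y (first listed qubit is x).\<close>

definition is_pure_3qubit :: "complex vec \<Rightarrow> bool" where
  "is_pure_3qubit psi \<longleftrightarrow> dim_vec psi = 8 \<and> (\<Sum>i<8. (cmod (psi $ i))^2) = 1"

definition density :: "complex vec \<Rightarrow> complex mat" where
  "density psi = mat (dim_vec psi) (dim_vec psi) (\<lambda>(i,j). psi $ i * cnj (psi $ j))"

definition ptrace_C :: "complex mat \<Rightarrow> complex mat" where
  "ptrace_C R = mat 4 4 (\<lambda>(i,j). \<Sum>c<2. R $$ (4*(i div 2) + 2*(i mod 2) + c, 4*(j div 2) + 2*(j mod 2) + c))"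

definition ptrace_B :: "complex mat \<Rightarrow> complex mat" where
  "ptrace_B R = mat 4 4 (\<lambda>(i,j). \<Sum>b<2. R $$ (4*(i div 2) + 2*b + i mod 2, 4*(j div 2) + 2*b + j mod 2))"

definition ptrace_A :: "complex mat \<Rightarrow> complex mat" where
  "ptrace_A R = mat 4 4 (\<lambda>(i,j). \<Sum>a<2. R $$ (4*a + i, 4*a + j))"

definition rhoAB :: "complex vec \<Rightarrow> complex mat" where "rhoAB psi = ptrace_C (density psi)"
definition rhoAC :: "complex vec \<Rightarrow> complex mat" where "rhoAC psi = ptrace_B (density psi)"
definition rhoBC :: "complex vec \<Rightarrow> complex mat" where "rhoBC psi = ptrace_A (density psi)"

definition pauli :: "nat \<Rightarrow> complex mat" where
  "pauli k = (if k = 1 then mat_of_rows_list 2 [[0, 1], [1, 0]]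
     else if k = 2 then mat_of_rows_list 2 [[0, -\<i>], [\<i>, 0]]
     else if k = 3 then mat_of_rows_list 2 [[1, 0], [0, -1]]
     else 1\<^sub>m 2)"

definition kron2 :: "complex mat \<Rightarrow> complex mat \<Rightarrow> complex mat" where
  "kron2 A B = mat 4 4 (\<lambda>(i,j). A $$ (i div 2, j div 2) * B $$ (i mod 2, j mod 2))"

definition mtrace :: "complex mat \<Rightarrow> complex" where
  "mtrace A = (\<Sum>i<dim_row A. A $$ (i,i))"

text \<open>t_kl = Tr[rho sigma_k (x) sigma_l]; real for Hermitian rho, so we take the real part.\<close>
definition corr_t :: "complex mat \<Rightarrow> nat \<Rightarrow> nat \<Rightarrow> real" where
  "corr_t rho k l = Re (mtrace (rho * kron2 (pauli k) (pauli l)))"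

definition S_corr :: "complex mat \<Rightarrow> real" where
  "S_corr rho = (\<Sum>k\<in>{1..3}. \<Sum>l\<in>{1..3}. (corr_t rho k l)^2)"

text \<open>The eigenvalues of rho*rho_tilde (with multiplicity, as roots of
  the characteristic polynomial) are real and nonnegative; lambda_i are their square roots,
  sorted in decreasing order.\<close>
definition rho_tilde_prod :: "complex mat \<Rightarrow> complex mat" where
  "rho_tilde_prod rho = rho * kron2 (pauli 2) (pauli 2) * map_mat cnj rho * kron2 (pauli 2) (pauli 2)"

definition wootters_lambdas :: "complex mat \<Rightarrow> real list" where
  "wootters_lambdas rho = rev (sorted_list_of_multiset
      (image_mset (\<lambda>z. sqrt (Re z)) (proots (char_poly (rho_tilde_prod rho)))))"

definition concurrence :: "complex mat \<Rightarrow> real" where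
  "concurrence rho = (let l = wootters_lambdas rho in max 0 (l!0 - l!1 - l!2 - l!3))"

definition S_max_total :: "complex vec \<Rightarrow> real" where
  "S_max_total psi = (let sAB = S_corr (rhoAB psi); sAC = S_corr (rhoAC psi); sBC = S_corr (rhoBC psi)
     in Max {sAB + sAC, sAB + sBC, sAC + sBC})"

definition E_W :: "complex vec \<Rightarrow> real" where
  "E_W psi = Min {(concurrence (rhoAB psi))^2, (concurrence (rhoAC psi))^2, (concurrence (rhoBC psi))^2}"

end

theory Submission
  imports Defs "Jordan_Normal_Form.Schur_Decomposition"
begin

lemma char_poly_zero_mat: "char_poly (0\<^sub>m n n :: complex mat) = monom 1 n"
proof -
  have "char_poly (0\<^sub>m n n :: complex mat) = (\<Prod>a\<leftarrow>diag_mat (0\<^sub>m n n). [:- a, 1:])"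
    by (rule char_poly_upper_triangular[of _ n]) (auto simp: upper_triangular_def)
  also have "map (\<lambda>a. [:- a, 1:]) (diag_mat (0\<^sub>m n n :: complex mat)) = map (\<lambda>_. [:0,1:]) [0..<n]"
    unfolding diag_mat_def by (auto intro!: map_cong)
  hence "(\<Prod>a\<leftarrow>diag_mat (0\<^sub>m n n :: complex mat). [:- a, 1:]) = [:0,1:] ^ n"
    by (simp add: map_replicate_const prod_list_replicate)
  finally show ?thesis by (simp add: monom_altdef)
qed

lemma cp_lin: "A \<in> carrier_mat n n \<Longrightarrow> \<exists>es. char_poly (A::complex mat) = (\<Prod>a\<leftarrow>es. [:- a, 1:])"
  using char_poly_factorized by blast

lemma char_poly_AB_BA:
  fixes A B :: "complex mat"
  assumes A: "A \<in> carrier_mat n m" and B: "B \<in> carrier_mat m n"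
  shows "char_poly (A * B) * monom 1 m = monom 1 n * char_poly (B * A)"
proof -
  define X1 where "X1 = four_block_mat (A * B) (0\<^sub>m n m) B (0\<^sub>m m m)"
  define X2 where "X2 = four_block_mat (0\<^sub>m n n) (0\<^sub>m n m) B (B * A)"
  define P where "P = four_block_mat (1\<^sub>m n) A (0\<^sub>m m n) (1\<^sub>m m)"
  define Q where "Q = four_block_mat (1\<^sub>m n) (- A) (0\<^sub>m m n) (1\<^sub>m m)"
  have AB: "A * B \<in> carrier_mat n n" and BA: "B * A \<in> carrier_mat m m" using A B by auto
  have c1: "char_poly X1 = char_poly (A * B) * char_poly (0\<^sub>m m m :: complex mat)"
    unfolding X1_def
    by (rule char_poly_0_block'[OF refl cp_lin[OF AB] cp_lin[of "0\<^sub>m m m" m] AB B], auto)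
  have c2: "char_poly X2 = char_poly (0\<^sub>m n n :: complex mat) * char_poly (B * A)"
    unfolding X2_def
    by (rule char_poly_0_block'[OF refl cp_lin[of "0\<^sub>m n n" n] cp_lin[OF BA] _ B BA], auto)
  have PQ: "P * Q = 1\<^sub>m (n+m)" unfolding P_def Q_def
    by (subst mult_four_block_mat[OF one_carrier_mat A zero_carrier_mat one_carrier_mat], insert A, auto simp flip: four_block_one_mat)
  have QP: "Q * P = 1\<^sub>m (n+m)" unfolding P_def Q_def
    by (subst mult_four_block_mat[OF one_carrier_mat uminus_carrier_mat[OF A] zero_carrier_mat one_carrier_mat], insert A, auto simp flip: four_block_one_mat)
  have X1eq: "X1 = P * X2 * Q"
  proof -
    have ABA: "A * (B * A) \<in> carrier_mat n m" using A B by auto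
    have "P * X2 = four_block_mat (A * B) (A * (B * A)) B (B * A)" unfolding P_def X2_def
      by (subst mult_four_block_mat[OF one_carrier_mat A zero_carrier_mat one_carrier_mat], insert A B, auto)
    also have "\<dots> * Q = four_block_mat (A * B) (0\<^sub>m n m) B (0\<^sub>m m m)" unfolding Q_def
      by (subst mult_four_block_mat[OF AB ABA B BA], insert A B, auto)
    finally show ?thesis unfolding X1_def by simp
  qed
  have "similar_mat X1 X2" unfolding similar_mat_def
    apply (rule exI[of _ P], rule exI[of _ Q])
    unfolding similar_mat_wit_def Let_def X1eq using PQ QP A B
    by (auto simp: X1_def X2_def P_def Q_def)
  from char_poly_similar[OF this] c1 c2 show ?thesis by (simp add: char_poly_zero_mat mult.commute)
qed

lemma char_poly_2:
  fixes f :: "nat \<times> nat \<Rightarrow> complex"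
  shows "char_poly (mat 2 2 f) = [: f(0,0)*f(1,1) - f(0,1)*f(1,0), -(f(0,0)+f(1,1)), 1 :]"
proof -
  let ?C = "char_poly_matrix (mat 2 2 f)"
  have C: "?C \<in> carrier_mat 2 2" by simp
  have "char_poly (mat 2 2 f) = (\<Sum>j<2. ?C $$ (0,j) * cofactor ?C 0 j)"
    unfolding char_poly_def by (rule laplace_expansion_row[OF C], simp)
  also have "\<dots> = ?C $$ (0,0) * cofactor ?C 0 0 + ?C $$ (0,1) * cofactor ?C 0 1"
    by (simp add: numeral_2_eq_2)
  also have "cofactor ?C 0 0 = ?C $$ (1,1)"
    unfolding cofactor_def by (subst det_single, auto simp: mat_delete_def char_poly_matrix_def)
  also have "cofactor ?C 0 1 = - ?C $$ (1,0)"
    unfolding cofactor_def by (subst det_single, auto simp: mat_delete_def char_poly_matrix_def)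
  finally show ?thesis
    by (simp add: char_poly_matrix_def algebra_simps mult_pCons_left mult_pCons_right)
qed

lemma conc_from_cp:
  fixes e1 e2 :: real
  assumes cp: "char_poly (rho_tilde_prod R) = monom 1 2 * [: complex_of_real e2, - complex_of_real e1, 1 :]"
    and e2: "0 \<le> e2" and e12: "4 * e2 \<le> e1^2" and e1: "0 \<le> e1"
  shows "(concurrence R)^2 = e1 - 2 * sqrt e2"
proof -
  define d where "d = sqrt (e1^2 - 4*e2)"
  define r1 where "r1 = (e1 + d) / 2"
  define r2 where "r2 = (e1 - d) / 2"
  have d0: "0 \<le> d" and dd: "d^2 = e1^2 - 4*e2" using e12 by (auto simp: d_def)
  have "d \<le> e1"
  proof -
    have "d^2 \<le> e1^2" using dd e2 by simp
    thus ?thesis using e1 d0 by (simp add: power2_le_iff_abs_le)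
  qed
  hence r2: "0 \<le> r2" and r12: "r2 \<le> r1" using d0 by (auto simp: r1_def r2_def)
  have sum: "r1 + r2 = e1" and prod: "r1 * r2 = e2"
    by (auto simp: r1_def r2_def field_simps) (simp add: algebra_simps dd[unfolded power2_eq_square] power2_eq_square)
  have fac: "[: complex_of_real e2, - complex_of_real e1, 1 :] = [: - of_real r1, 1:] * [: - of_real r2, 1 :]"
    by (simp add: sum[symmetric] prod[symmetric] algebra_simps)
  have m2: "monom (1::complex) 2 = [: 0, 1:] * [: 0, 1 :]"
    by (simp add: monom_altdef power2_eq_square)
  have "proots (char_poly (rho_tilde_prod R)) = {# 0, 0, of_real r1, of_real r2 #}"
    unfolding cp fac m2 by (simp add: proots_mult del: mult_pCons_left mult_pCons_right)
  hence "wootters_lambdas R = rev (sort [0, 0, sqrt r1, sqrt r2])"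
    unfolding wootters_lambdas_def by simp
  also have "sort [0, 0, sqrt r1, sqrt r2] = [0, 0, sqrt r2, sqrt r1]"
    using r2 r12 by (simp add: real_sqrt_le_iff del: real_sqrt_le_mono)
  finally have wl: "wootters_lambdas R = [sqrt r1, sqrt r2, 0, 0]" by simp
  have "concurrence R = sqrt r1 - sqrt r2"
    unfolding concurrence_def wl Let_def using r12 by (simp add: real_sqrt_le_mono)
  hence "(concurrence R)^2 = r1 + r2 - 2 * sqrt (r1 * r2)"
    using r2 r12 by (simp add: power2_diff real_sqrt_mult)
  thus ?thesis using sum prod by simp
qed

lemma lt4: "(i::nat) < 4 \<Longrightarrow> i = 0 \<or> i = 1 \<or> i = 2 \<or> i = 3" by auto
lemma lt2: "(i::nat) < 2 \<Longrightarrow> i = 0 \<or> i = 1" by auto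
lemma set4: "{0..<4::nat} = {0,1,2,3}" by auto
lemma set2: "{0..<2::nat} = {0,1}" by auto
lemma set4': "{..<4::nat} = {0,1,2,3}" by auto
lemma set2': "{..<2::nat} = {0,1}" by auto

definition Sg :: "complex mat" where
  "Sg = mat 4 4 (\<lambda>(i,j). if i + j = 3 then (if i = 0 \<or> i = 3 then -1 else 1) else 0)"

lemma Sg_eq: "kron2 (pauli 2) (pauli 2) = Sg"
proof (rule eq_matI)
  fix i j assume "i < dim_row Sg" "j < dim_col Sg"
  hence "i < 4" "j < 4" by (auto simp: Sg_def)
  thus "kron2 (pauli 2) (pauli 2) $$ (i, j) = Sg $$ (i, j)"
    by (auto dest!: lt4 simp: kron2_def Sg_def pauli_def mat_of_rows_list_def)
qed (auto simp: kron2_def Sg_def)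

definition kq :: "(nat \<Rightarrow> nat \<Rightarrow> complex) \<Rightarrow> nat \<Rightarrow> nat \<Rightarrow> complex" where
  "kq m p q = - m 0 p * m 3 q + m 1 p * m 2 q + m 2 p * m 1 q - m 3 p * m 0 q"

lemma kq_sym: "kq m p q = kq m q p" unfolding kq_def by (simp add: algebra_simps)

lemma rtp_struct:
  fixes m :: "nat \<Rightarrow> nat \<Rightarrow> complex"
  defines "M \<equiv> mat 4 2 (\<lambda>(i,j). m i j)"
    and "Mh \<equiv> mat 2 4 (\<lambda>(i,j). cnj (m j i))"
    and "Mc \<equiv> mat 4 2 (\<lambda>(i,j). cnj (m i j))"
    and "Mt \<equiv> mat 2 4 (\<lambda>(i,j). m j i)"
  assumes R: "R = mat 4 4 (\<lambda>(i,j). \<Sum>c<2. m i c * cnj (m j c))"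
  shows "rho_tilde_prod R = M * (Mh * Sg * Mc * Mt * Sg)"
    and "(Mh * Sg * Mc * Mt * Sg) * M = mat 2 2 (\<lambda>(p,q). \<Sum>r<2. cnj (kq m p r) * kq m r q)"
proof -
  have cM: "M \<in> carrier_mat 4 2" "Mh \<in> carrier_mat 2 4" "Mc \<in> carrier_mat 4 2" "Mt \<in> carrier_mat 2 4"
    "Sg \<in> carrier_mat 4 4" by (auto simp: M_def Mh_def Mc_def Mt_def Sg_def)
  have R1: "R = M * Mh"
    by (rule eq_matI) (auto simp: R M_def Mh_def scalar_prod_def set2 set2')
  have R2: "map_mat cnj R = Mc * Mt"
    by (rule eq_matI) (auto simp: R Mc_def Mt_def scalar_prod_def set2 set2')
  show "rho_tilde_prod R = M * (Mh * Sg * Mc * Mt * Sg)"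
  proof -
    have "rho_tilde_prod R = M * Mh * Sg * (Mc * Mt) * Sg"
      unfolding rho_tilde_prod_def Sg_eq R2 by (simp only: R1)
    also have "M * Mh * Sg = M * (Mh * Sg)" by (rule assoc_mult_mat) (use cM in auto)
    also have "M * (Mh * Sg) * (Mc * Mt) = M * ((Mh * Sg) * (Mc * Mt))" by (rule assoc_mult_mat) (use cM in auto)
    also have "(Mh * Sg) * (Mc * Mt) = (Mh * Sg) * Mc * Mt" by (rule assoc_mult_mat[symmetric]) (use cM in auto)
    also have "M * (Mh * Sg * Mc * Mt) * Sg = M * (Mh * Sg * Mc * Mt * Sg)" by (rule assoc_mult_mat) (use cM in auto)
    finally show ?thesis .
  qed
  have K: "Mt * Sg * M = mat 2 2 (\<lambda>(p,q). kq m p q)"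
  proof (rule eq_matI)
    fix i j assume "i < dim_row (mat 2 2 (\<lambda>(p,q). kq m p q))" "j < dim_col (mat 2 2 (\<lambda>(p,q). kq m p q))"
    hence "i < 2" "j < 2" by auto
    thus "(Mt * Sg * M) $$ (i, j) = mat 2 2 (\<lambda>(p,q). kq m p q) $$ (i, j)"
      using cM by (auto simp: Mt_def M_def Sg_def kq_def scalar_prod_def set4 set2 algebra_simps)
  qed (auto simp: Mt_def M_def)
  have Kc: "Mh * Sg * Mc = mat 2 2 (\<lambda>(p,q). cnj (kq m p q))"
  proof (rule eq_matI)
    fix i j assume "i < dim_row (mat 2 2 (\<lambda>(p,q). cnj (kq m p q)))" "j < dim_col (mat 2 2 (\<lambda>(p,q). cnj (kq m p q)))"
    hence "i < 2" "j < 2" by auto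
    thus "(Mh * Sg * Mc) $$ (i, j) = mat 2 2 (\<lambda>(p,q). cnj (kq m p q)) $$ (i, j)"
      using cM by (auto simp: Mh_def Mc_def Sg_def kq_def scalar_prod_def set4 set2 algebra_simps)
  qed (auto simp: Mh_def Mc_def)
  have "(Mh * Sg * Mc * Mt * Sg) * M = (Mh * Sg * Mc) * (Mt * Sg * M)"
  proof -
    have "Mh * Sg * Mc * Mt * Sg = (Mh * Sg * Mc) * (Mt * Sg)" by (rule assoc_mult_mat) (use cM in auto)
    also have "\<dots> * M = (Mh * Sg * Mc) * (Mt * Sg * M)" by (rule assoc_mult_mat) (use cM in auto)
    finally show ?thesis .
  qed
  also have "\<dots> = mat 2 2 (\<lambda>(p,q). \<Sum>r<2. cnj (kq m p r) * kq m r q)"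
    unfolding K Kc by (rule eq_matI) (auto simp: scalar_prod_def set2 set2')
  finally show "(Mh * Sg * Mc * Mt * Sg) * M = mat 2 2 (\<lambda>(p,q). \<Sum>r<2. cnj (kq m p r) * kq m r q)" .
qed

lemma conc_sq:
  fixes m :: "nat \<Rightarrow> nat \<Rightarrow> complex"
  assumes R: "R = mat 4 4 (\<lambda>(i,j). \<Sum>c<2. m i c * cnj (m j c))"
  shows "(concurrence R)^2 = (cmod (kq m 0 0))^2 + 2 * (cmod (kq m 0 1))^2 + (cmod (kq m 1 1))^2
           - 2 * cmod (kq m 0 0 * kq m 1 1 - (kq m 0 1)^2)"
proof -
  define M where "M = mat 4 2 (\<lambda>(i,j). m i j)"
  define N where "N = mat 2 4 (\<lambda>(i,j). cnj (m j i)) * Sg * mat 4 2 (\<lambda>(i,j). cnj (m i j)) * mat 2 4 (\<lambda>(i,j). m j i) * Sg"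
  note st = rtp_struct[OF R, folded M_def N_def]
  have cM: "M \<in> carrier_mat 4 2" "N \<in> carrier_mat 2 4" by (auto simp: M_def N_def Sg_def)
  define a where "a = kq m 0 0"
  define b where "b = kq m 0 1"
  define c where "c = kq m 1 1"
  have b': "kq m 1 0 = b" using kq_sym unfolding b_def by metis
  define e1 where "e1 = (cmod a)^2 + 2 * (cmod b)^2 + (cmod c)^2"
  define e2 where "e2 = (cmod (a * c - b^2))^2"
  have cp2: "char_poly (N * M) = [: complex_of_real e2, - complex_of_real e1, 1 :]"
  proof -
    have abc: "kq m 0 0 = a" "kq m 0 (Suc 0) = b" "kq m (Suc 0) 0 = b" "kq m (Suc 0) (Suc 0) = c"
      using b' by (auto simp: a_def b_def c_def)
    have nsq: "complex_of_real (cmod z) * complex_of_real (cmod z) = z * cnj z" for z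
      using complex_norm_square[of z] by (simp add: power2_eq_square)
    show ?thesis unfolding st(2) char_poly_2
      by (simp add: set2' abc e1_def e2_def power2_eq_square nsq) (simp add: algebra_simps)
  qed
  have "char_poly (M * N) * monom 1 2 = (monom 1 2 * [: complex_of_real e2, - complex_of_real e1, 1 :]) * monom 1 2"
  proof -
    have m4: "monom (1::complex) 4 = monom 1 2 * monom 1 2" by (simp add: mult_monom)
    show ?thesis unfolding char_poly_AB_BA[OF cM] cp2 m4 by (simp only: ac_simps)
  qed
  then have cp: "char_poly (rho_tilde_prod R) = monom 1 2 * [: complex_of_real e2, - complex_of_real e1, 1 :]"
  proof -
    have nz: "monom (1::complex) 2 \<noteq> 0" by (simp add: monom_eq_0_iff)
    have eq: "char_poly (M * N) * monom 1 2 = (monom 1 2 * [: complex_of_real e2, - complex_of_real e1, 1 :]) * monom 1 2"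
      by fact
    have "char_poly (M * N) = monom 1 2 * [: complex_of_real e2, - complex_of_real e1, 1 :]"
      using eq unfolding mult_right_cancel[OF nz] .
    thus ?thesis unfolding st(1) .
  qed
  have "cmod (a * c - b^2) \<le> cmod a * cmod c + (cmod b)^2"
    using norm_triangle_ineq4[of "a*c" "b^2"] by (simp add: norm_mult norm_power)
  moreover have "2 * (cmod a * cmod c) \<le> (cmod a)^2 + (cmod c)^2"
  proof -
    have "0 \<le> (cmod a - cmod c)^2" by simp
    thus ?thesis by (simp add: power2_diff)
  qed
  ultimately have le: "2 * cmod (a * c - b^2) \<le> e1" unfolding e1_def by linarith
  have "(concurrence R)^2 = e1 - 2 * sqrt e2"
  proof (rule conc_from_cp[OF cp])
    show "0 \<le> e2" unfolding e2_def by simp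
    show "0 \<le> e1" unfolding e1_def by simp
    have "(2 * cmod (a * c - b^2))^2 \<le> e1^2" using le by (intro power_mono) auto
    thus "4 * e2 \<le> e1^2" unfolding e2_def by (simp add: power_mult_distrib)
  qed
  thus ?thesis by (simp add: e1_def e2_def a_def b_def c_def)
qed

lemma set4'': "{..<4::nat} = {0,1,2,3}" by auto

lemma mtrace_kron:
  "mtrace (mat 4 4 r * kron2 A B) = (\<Sum>i<4. \<Sum>j<4. r (i,j) * (A $$ (j div 2, i div 2) * B $$ (j mod 2, i mod 2)))"
  unfolding mtrace_def kron2_def by (simp add: scalar_prod_def atLeast0LessThan)

lemma t11: "corr_t (mat 4 4 r) 1 1 = Re (r(0,3) + r(1,2) + r(2,1) + r(3,0))"
  unfolding corr_t_def mtrace_kron by (simp add: set4'' pauli_def mat_of_rows_list_def algebra_simps)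

lemma t12: "corr_t (mat 4 4 r) 1 2 = Re (\<i> * r(0,3) - \<i> * r(1,2) + \<i> * r(2,1) - \<i> * r(3,0))"
  unfolding corr_t_def mtrace_kron by (simp add: set4'' pauli_def mat_of_rows_list_def algebra_simps)

lemma t13: "corr_t (mat 4 4 r) 1 3 = Re (r(0,2) - r(1,3) + r(2,0) - r(3,1))"
  unfolding corr_t_def mtrace_kron by (simp add: set4'' pauli_def mat_of_rows_list_def algebra_simps)

lemma t21: "corr_t (mat 4 4 r) 2 1 = Re (\<i> * r(0,3) + \<i> * r(1,2) - \<i> * r(2,1) - \<i> * r(3,0))"
  unfolding corr_t_def mtrace_kron by (simp add: set4'' pauli_def mat_of_rows_list_def algebra_simps)

lemma t22: "corr_t (mat 4 4 r) 2 2 = Re (- r(0,3) + r(1,2) + r(2,1) - r(3,0))"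
  unfolding corr_t_def mtrace_kron by (simp add: set4'' pauli_def mat_of_rows_list_def algebra_simps)

lemma t23: "corr_t (mat 4 4 r) 2 3 = Re (\<i> * r(0,2) - \<i> * r(1,3) - \<i> * r(2,0) + \<i> * r(3,1))"
  unfolding corr_t_def mtrace_kron by (simp add: set4'' pauli_def mat_of_rows_list_def algebra_simps)

lemma t31: "corr_t (mat 4 4 r) 3 1 = Re (r(0,1) + r(1,0) - r(2,3) - r(3,2))"
  unfolding corr_t_def mtrace_kron by (simp add: set4'' pauli_def mat_of_rows_list_def algebra_simps)

lemma t32: "corr_t (mat 4 4 r) 3 2 = Re (\<i> * r(0,1) - \<i> * r(1,0) - \<i> * r(2,3) + \<i> * r(3,2))"
  unfolding corr_t_def mtrace_kron by (simp add: set4'' pauli_def mat_of_rows_list_def algebra_simps)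

lemma t33: "corr_t (mat 4 4 r) 3 3 = Re (r(0,0) - r(1,1) - r(2,2) + r(3,3))"
  unfolding corr_t_def mtrace_kron by (simp add: set4'' pauli_def mat_of_rows_list_def algebra_simps)

lemma set13: "{1..3::nat} = {1,2,3}" by auto

lemma s2: "{..<2::nat} = {0,1}" by auto

lemma S_corr_herm:
  fixes r :: "nat \<times> nat \<Rightarrow> complex"
  assumes h: "\<And>i j. i < 4 \<Longrightarrow> j < 4 \<Longrightarrow> r (j,i) = cnj (r (i,j))"
  shows "S_corr (mat 4 4 r) = 4 * (\<Sum>i<4. \<Sum>j<4. (cmod (r(i,j)))^2)
     - 2 * (\<Sum>a<2. \<Sum>a'<2. (cmod (r(2*a,2*a') + r(2*a+1,2*a'+1)))^2)
     - 2 * (\<Sum>b<2. \<Sum>b'<2. (cmod (r(b,b') + r(2+b,2+b')))^2)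
     + (\<Sum>i<4. Re (r(i,i)))^2"
proof -
  have hh: "r (1,0) = cnj (r (0,1))" "r (2,0) = cnj (r (0,2))" "r (3,0) = cnj (r (0,3))"
     "r (2,1) = cnj (r (1,2))" "r (3,1) = cnj (r (1,3))" "r (3,2) = cnj (r (2,3))"
    by (rule h; simp)+
  have hh1: "r (Suc 0,0) = cnj (r (0,Suc 0))" "r (2,Suc 0) = cnj (r (Suc 0,2))" "r (3,Suc 0) = cnj (r (Suc 0,3))"
    by (rule h; simp)+
  have hd: "Im (r (i,i)) = 0" if "i < 4" for i
    using h[OF that that] by (metis Reals_cnj_iff complex_is_Real_iff)
  have hd': "Im (r (0,0)) = 0" "Im (r (1,1)) = 0" "Im (r (2,2)) = 0" "Im (r (3,3)) = 0" "Im (r (Suc 0,Suc 0)) = 0" using hd by auto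
  define a00 where "a00 = Re (r(0,0))"
  define a01 where "a01 = Re (r(0,1))"
  define b01 where "b01 = Im (r(0,1))"
  define a02 where "a02 = Re (r(0,2))"
  define b02 where "b02 = Im (r(0,2))"
  define a03 where "a03 = Re (r(0,3))"
  define b03 where "b03 = Im (r(0,3))"
  define a11 where "a11 = Re (r(1,1))"
  define a12 where "a12 = Re (r(1,2))"
  define b12 where "b12 = Im (r(1,2))"
  define a13 where "a13 = Re (r(1,3))"
  define b13 where "b13 = Im (r(1,3))"
  define a22 where "a22 = Re (r(2,2))"
  define a23 where "a23 = Re (r(2,3))"
  define b23 where "b23 = Im (r(2,3))"
  define a33 where "a33 = Re (r(3,3))"
  note defs = a00_def a01_def a02_def a03_def a11_def a12_def a13_def a22_def a23_def a33_def b01_def b02_def b03_def b12_def b13_def b23_def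
  have L: "S_corr (mat 4 4 r) = (2 * a03 + 2 * a12)^2 + (- 2 * b03 + 2 * b12)^2 + (2 * a02 - 2 * a13)^2 + (- 2 * b03 - 2 * b12)^2 + (- 2 * a03 + 2 * a12)^2 + (- 2 * b02 + 2 * b13)^2 + (2 * a01 - 2 * a23)^2 + (- 2 * b01 + 2 * b23)^2 + (a00 - a11 - a22 + a33)^2"
  proof -
    have L0: "S_corr (mat 4 4 r) = (corr_t (mat 4 4 r) 1 1)^2 + (corr_t (mat 4 4 r) 1 2)^2 + (corr_t (mat 4 4 r) 1 3)^2
      + (corr_t (mat 4 4 r) 2 1)^2 + (corr_t (mat 4 4 r) 2 2)^2 + (corr_t (mat 4 4 r) 2 3)^2
      + (corr_t (mat 4 4 r) 3 1)^2 + (corr_t (mat 4 4 r) 3 2)^2 + (corr_t (mat 4 4 r) 3 3)^2"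
      unfolding S_corr_def set13 by (simp add: algebra_simps)
    show ?thesis unfolding L0 t11 t12 t13 t21 t22 t23 t31 t32 t33 by (simp add: hh hh1 defs)
  qed
  have R1: "(\<Sum>i<4. \<Sum>j<4. (cmod (r(i,j)))^2) = (a00)^2 + ((a01)^2 + (b01)^2) + ((a02)^2 + (b02)^2) + ((a03)^2 + (b03)^2) + ((a01)^2 + (b01)^2) + (a11)^2 + ((a12)^2 + (b12)^2) + ((a13)^2 + (b13)^2) + ((a02)^2 + (b02)^2) + ((a12)^2 + (b12)^2) + (a22)^2 + ((a23)^2 + (b23)^2) + ((a03)^2 + (b03)^2) + ((a13)^2 + (b13)^2) + ((a23)^2 + (b23)^2) + (a33)^2"
    by (simp add: set4'' hh hh1 defs cmod_power2 hd')
  have R2: "(\<Sum>a<2. \<Sum>a'<2. (cmod (r(2*a,2*a') + r(2*a+1,2*a'+1)))^2) = (a00 + a11)^2 + ((a02 + a13)^2 + (b02 + b13)^2) + ((a02 + a13)^2 + ((- b02) + (- b13))^2) + (a22 + a33)^2"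
    by (simp add: s2 hh hh1 defs cmod_power2 hd' numeral_3_eq_3[symmetric] numeral_2_eq_2[symmetric])
  have R3: "(\<Sum>b<2. \<Sum>b'<2. (cmod (r(b,b') + r(2+b,2+b')))^2) = (a00 + a22)^2 + ((a01 + a23)^2 + (b01 + b23)^2) + ((a01 + a23)^2 + ((- b01) + (- b23))^2) + (a11 + a33)^2"
    by (simp add: s2 hh hh1 defs cmod_power2 hd' numeral_3_eq_3[symmetric] numeral_2_eq_2[symmetric])
  have R4: "(\<Sum>i<4. Re (r(i,i))) = a00 + a11 + a22 + a33" by (simp add: set4'' defs)
  show ?thesis unfolding L R1 R2 R3 R4 by (simp add: algebra_simps power2_eq_square)
qed

definition mAB :: "complex vec \<Rightarrow> nat \<Rightarrow> nat \<Rightarrow> complex" where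
  "mAB psi i c = psi $ (4*(i div 2) + 2*(i mod 2) + c)"
definition mAC :: "complex vec \<Rightarrow> nat \<Rightarrow> nat \<Rightarrow> complex" where
  "mAC psi i b = psi $ (4*(i div 2) + 2*b + i mod 2)"
definition mBC :: "complex vec \<Rightarrow> nat \<Rightarrow> nat \<Rightarrow> complex" where
  "mBC psi i a = psi $ (4*a + i)"

lemma rhoAB_eq: "dim_vec psi = 8 \<Longrightarrow> rhoAB psi = mat 4 4 (\<lambda>(i,j). \<Sum>c<2. mAB psi i c * cnj (mAB psi j c))"
  unfolding rhoAB_def ptrace_C_def density_def mAB_def
  by (rule eq_matI) (auto dest!: lt4 simp: s2)
lemma rhoAC_eq: "dim_vec psi = 8 \<Longrightarrow> rhoAC psi = mat 4 4 (\<lambda>(i,j). \<Sum>c<2. mAC psi i c * cnj (mAC psi j c))"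
  unfolding rhoAC_def ptrace_B_def density_def mAC_def
  by (rule eq_matI) (auto dest!: lt4 simp: s2)
lemma rhoBC_eq: "dim_vec psi = 8 \<Longrightarrow> rhoBC psi = mat 4 4 (\<lambda>(i,j). \<Sum>c<2. mBC psi i c * cnj (mBC psi j c))"
  unfolding rhoBC_def ptrace_A_def density_def mBC_def
  by (rule eq_matI) (auto dest!: lt4 simp: s2)

definition TT :: "(nat \<Rightarrow> nat \<Rightarrow> complex) \<Rightarrow> real" where
  "TT m = (cmod (kq m 0 0))^2 + 2 * (cmod (kq m 0 1))^2 + (cmod (kq m 1 1))^2"
definition NN :: "complex vec \<Rightarrow> real" where
  "NN psi = (\<Sum>k<8. (cmod (psi $ k))^2)"

lemma herm_r: "(\<lambda>(i,j). \<Sum>c<(2::nat). m i c * cnj (m j c)) (j, i) = cnj ((\<lambda>(i,j). \<Sum>c<2. m i c * cnj (m j c)) (i, j))"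
  by (simp add: s2 mult.commute)

lemma ofr_cmod2: "(complex_of_real (cmod z))^2 = z * cnj z"
  using complex_norm_square[of z] by simp
lemma ofr_Re: "complex_of_real (Re z) = (z + cnj z) / 2"
  by (simp add: complex_add_cnj)

lemma set8: "{..<8::nat} = {0,1,2,3,4,5,6,7}" by auto

lemma trAB: "(\<Sum>i<4. Re ((\<lambda>(i,j). \<Sum>c<2. mAB psi i c * cnj (mAB psi j c)) (i,i))) = NN psi"
  unfolding NN_def cmod_power2 by (simp add: power2_eq_square s2 set4'' set8 mAB_def numeral_3_eq_3[symmetric] numeral_2_eq_2[symmetric])
lemma trAC: "(\<Sum>i<4. Re ((\<lambda>(i,j). \<Sum>c<2. mAC psi i c * cnj (mAC psi j c)) (i,i))) = NN psi"
  unfolding NN_def cmod_power2 by (simp add: power2_eq_square s2 set4'' set8 mAC_def numeral_3_eq_3[symmetric] numeral_2_eq_2[symmetric])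
lemma trBC: "(\<Sum>i<4. Re ((\<lambda>(i,j). \<Sum>c<2. mBC psi i c * cnj (mBC psi j c)) (i,i))) = NN psi"
  unfolding NN_def cmod_power2 by (simp add: power2_eq_square s2 set4'' set8 mBC_def numeral_3_eq_3[symmetric] numeral_2_eq_2[symmetric])


lemma E1AB: "S_corr (rhoAB psi) = (NN psi)^2 + 2*TT (mAB psi) - TT (mAC psi) - TT (mBC psi)"
  if "dim_vec psi = 8"
proof -
  define z0 where "z0 = psi $ 0"
  define z1 where "z1 = psi $ 1"
  define z2 where "z2 = psi $ 2"
  define z3 where "z3 = psi $ 3"
  define z4 where "z4 = psi $ 4"
  define z5 where "z5 = psi $ 5"
  define z6 where "z6 = psi $ 6"
  define z7 where "z7 = psi $ 7"
  have z1': "psi $ Suc 0 = z1" by (simp add: z1_def)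
  note zs = z0_def[symmetric] z1_def[symmetric] z2_def[symmetric] z3_def[symmetric] z4_def[symmetric] z5_def[symmetric] z6_def[symmetric] z7_def[symmetric] z1'
  have "complex_of_real (S_corr (rhoAB psi)) = complex_of_real ((NN psi)^2 + 2*TT (mAB psi) - TT (mAC psi) - TT (mBC psi))"
    unfolding rhoAB_eq[OF that] S_corr_herm[of "\<lambda>(i,j). \<Sum>c<2. mAB psi i c * cnj (mAB psi j c)", OF herm_r] trAB
    apply (simp add: s2 set4'' set8 TT_def NN_def kq_def mAB_def mAC_def mBC_def numeral_3_eq_3[symmetric] numeral_2_eq_2[symmetric])
    apply (simp only: of_real_add of_real_diff of_real_mult of_real_power of_real_numeral of_real_minus of_real_neg_numeral of_real_1 of_real_0 ofr_cmod2 ofr_Re)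
    apply (simp only: complex_cnj_add complex_cnj_mult complex_cnj_diff complex_cnj_minus complex_cnj_cnj complex_cnj_numeral complex_cnj_divide)
    apply (simp only: zs)
    by (simp add: algebra_simps)
  thus ?thesis by (simp only: of_real_eq_iff)
qed

lemma E1AC: "S_corr (rhoAC psi) = (NN psi)^2 + 2*TT (mAC psi) - TT (mAB psi) - TT (mBC psi)"
  if "dim_vec psi = 8"
proof -
  define z0 where "z0 = psi $ 0"
  define z1 where "z1 = psi $ 1"
  define z2 where "z2 = psi $ 2"
  define z3 where "z3 = psi $ 3"
  define z4 where "z4 = psi $ 4"
  define z5 where "z5 = psi $ 5"
  define z6 where "z6 = psi $ 6"
  define z7 where "z7 = psi $ 7"
  have z1': "psi $ Suc 0 = z1" by (simp add: z1_def)
  note zs = z0_def[symmetric] z1_def[symmetric] z2_def[symmetric] z3_def[symmetric] z4_def[symmetric] z5_def[symmetric] z6_def[symmetric] z7_def[symmetric] z1'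
  have "complex_of_real (S_corr (rhoAC psi)) = complex_of_real ((NN psi)^2 + 2*TT (mAC psi) - TT (mAB psi) - TT (mBC psi))"
    unfolding rhoAC_eq[OF that] S_corr_herm[of "\<lambda>(i,j). \<Sum>c<2. mAC psi i c * cnj (mAC psi j c)", OF herm_r] trAC
    apply (simp add: s2 set4'' set8 TT_def NN_def kq_def mAB_def mAC_def mBC_def numeral_3_eq_3[symmetric] numeral_2_eq_2[symmetric])
    apply (simp only: of_real_add of_real_diff of_real_mult of_real_power of_real_numeral of_real_minus of_real_neg_numeral of_real_1 of_real_0 ofr_cmod2 ofr_Re)
    apply (simp only: complex_cnj_add complex_cnj_mult complex_cnj_diff complex_cnj_minus complex_cnj_cnj complex_cnj_numeral complex_cnj_divide)
    apply (simp only: zs)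
    by (simp add: algebra_simps)
  thus ?thesis by (simp only: of_real_eq_iff)
qed

lemma E1BC: "S_corr (rhoBC psi) = (NN psi)^2 + 2*TT (mBC psi) - TT (mAB psi) - TT (mAC psi)"
  if "dim_vec psi = 8"
proof -
  define z0 where "z0 = psi $ 0"
  define z1 where "z1 = psi $ 1"
  define z2 where "z2 = psi $ 2"
  define z3 where "z3 = psi $ 3"
  define z4 where "z4 = psi $ 4"
  define z5 where "z5 = psi $ 5"
  define z6 where "z6 = psi $ 6"
  define z7 where "z7 = psi $ 7"
  have z1': "psi $ Suc 0 = z1" by (simp add: z1_def)
  note zs = z0_def[symmetric] z1_def[symmetric] z2_def[symmetric] z3_def[symmetric] z4_def[symmetric] z5_def[symmetric] z6_def[symmetric] z7_def[symmetric] z1'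
  have "complex_of_real (S_corr (rhoBC psi)) = complex_of_real ((NN psi)^2 + 2*TT (mBC psi) - TT (mAB psi) - TT (mAC psi))"
    unfolding rhoBC_eq[OF that] S_corr_herm[of "\<lambda>(i,j). \<Sum>c<2. mBC psi i c * cnj (mBC psi j c)", OF herm_r] trBC
    apply (simp add: s2 set4'' set8 TT_def NN_def kq_def mAB_def mAC_def mBC_def numeral_3_eq_3[symmetric] numeral_2_eq_2[symmetric])
    apply (simp only: of_real_add of_real_diff of_real_mult of_real_power of_real_numeral of_real_minus of_real_neg_numeral of_real_1 of_real_0 ofr_cmod2 ofr_Re)
    apply (simp only: complex_cnj_add complex_cnj_mult complex_cnj_diff complex_cnj_minus complex_cnj_cnj complex_cnj_numeral complex_cnj_divide)
    apply (simp only: zs)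
    by (simp add: algebra_simps)
  thus ?thesis by (simp only: of_real_eq_iff)
qed

lemma null_dir:
  fixes a b c :: complex
  shows "\<exists>al be. (cmod al)^2 + (cmod be)^2 = 1 \<and> al^2*a + 2*al*be*b + be^2*c = 0"
proof (cases "c = 0")
  case True
  show ?thesis by (rule exI[of _ 0], rule exI[of _ 1]) (simp add: True)
next
  case False
  define r where "r = csqrt (b^2 - a*c)"
  have r2: "r^2 = b^2 - a*c" unfolding r_def by simp
  define b0 where "b0 = (-b + r) / c"
  have eq0: "a + 2*b0*b + b0^2*c = 0"
  proof -
    have "c * (a + 2*b0*b + b0^2*c) = c*a + 2*(c*b0)*b + (c*b0)^2" by (simp add: algebra_simps power2_eq_square)
    also have "c*b0 = -b + r" unfolding b0_def using False by simp
    also have "c*a + 2*(-b+r)*b + (-b+r)^2 = 0" using r2 by (simp add: algebra_simps power2_eq_square)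
    finally show ?thesis using False by simp
  qed
  define t where "t = sqrt (1 + (cmod b0)^2)"
  have t0: "t > 0" unfolding t_def by (simp add: add_pos_nonneg)
  have t2: "t^2 = 1 + (cmod b0)^2" unfolding t_def by simp
  show ?thesis
  proof (rule exI[of _ "complex_of_real (1/t)"], rule exI[of _ "b0 / complex_of_real t"], rule conjI)
    show "(cmod (complex_of_real (1/t)))^2 + (cmod (b0 / complex_of_real t))^2 = 1"
    proof -
      have pos: "1 + (cmod b0)^2 > 0" by (simp add: add_pos_nonneg)
      have "(cmod (complex_of_real (1/t)))^2 + (cmod (b0 / complex_of_real t))^2 = (1 + (cmod b0)^2) / t^2"
        using t0 by (simp add: norm_divide power_divide add_divide_distrib)
      thus ?thesis using t2 pos by simp
    qed
    have "(complex_of_real (1/t))^2 * a + 2 * complex_of_real (1/t) * (b0 / complex_of_real t) * b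
        + (b0 / complex_of_real t)^2 * c = (a + 2*b0*b + b0^2*c) / (complex_of_real t)^2"
      using t0 by (simp add: field_simps power2_eq_square)
    thus "(complex_of_real (1/t))^2 * a + 2 * complex_of_real (1/t) * (b0 / complex_of_real t) * b
        + (b0 / complex_of_real t)^2 * c = 0" using eq0 by simp
  qed
qed

definition qf :: "complex \<Rightarrow> complex \<Rightarrow> complex \<Rightarrow> complex \<Rightarrow> complex \<Rightarrow> complex \<Rightarrow> complex \<Rightarrow> complex \<Rightarrow> complex" where
  "qf v0 v1 v2 v3 w0 w1 w2 w3 = - v0*w3 + v1*w2 + v2*w1 - v3*w0"

lemmas cnj_simps = complex_cnj_add complex_cnj_mult complex_cnj_diff complex_cnj_minus complex_cnj_cnj
  complex_cnj_numeral complex_cnj_one complex_cnj_zero complex_cnj_power complex_cnj_complex_of_real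
lemmas ofr_simps = of_real_add of_real_diff of_real_mult of_real_power of_real_numeral of_real_minus
  of_real_neg_numeral of_real_1 of_real_0 ofr_cmod2

lemma qf_self_bound: "cmod (qf v0 v1 v2 v3 v0 v1 v2 v3) \<le> (cmod v0)^2 + (cmod v1)^2 + (cmod v2)^2 + (cmod v3)^2"
proof -
  have "qf v0 v1 v2 v3 v0 v1 v2 v3 = 2 * (v1 * v2) - 2 * (v0 * v3)" unfolding qf_def by (simp add: algebra_simps)
  hence "cmod (qf v0 v1 v2 v3 v0 v1 v2 v3) \<le> 2 * (cmod v1 * cmod v2) + 2 * (cmod v0 * cmod v3)"
    by (metis norm_triangle_ineq4 norm_mult norm_numeral)
  also have "\<dots> \<le> (cmod v0)^2 + (cmod v1)^2 + (cmod v2)^2 + (cmod v3)^2"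
  proof -
    have "0 \<le> (cmod v1 - cmod v2)^2" "0 \<le> (cmod v0 - cmod v3)^2" by simp_all
    thus ?thesis by (simp add: power2_diff)
  qed
  finally show ?thesis .
qed

lemma key_abs:
  fixes x0 x1 x2 x3 y0 y1 y2 y3 :: complex
  defines "a \<equiv> qf x0 x1 x2 x3 x0 x1 x2 x3" and "b \<equiv> qf x0 x1 x2 x3 y0 y1 y2 y3"
    and "c \<equiv> qf y0 y1 y2 y3 y0 y1 y2 y3"
    and "P0 \<equiv> (cmod x0)^2 + (cmod x1)^2 + (cmod x2)^2 + (cmod x3)^2"
    and "P1 \<equiv> (cmod y0)^2 + (cmod y1)^2 + (cmod y2)^2 + (cmod y3)^2"
    and "g \<equiv> x0 * cnj y0 + x1 * cnj y1 + x2 * cnj y2 + x3 * cnj y3"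
  shows "4 * (P0 * P1 - (cmod g)^2) + (cmod a)^2 + 2 * (cmod b)^2 + (cmod c)^2 - 6 * cmod (a * c - b^2)
     \<le> 4/3 * (P0 + P1)^2"
proof -
  obtain al be where n1: "(cmod al)^2 + (cmod be)^2 = 1" and h0: "al^2*a + 2*al*be*b + be^2*c = 0"
    using null_dir by blast
  have s1: "al * cnj al + be * cnj be = 1"
  proof -
    have "complex_of_real ((cmod al)^2 + (cmod be)^2) = 1" using n1 by simp
    thus ?thesis by (simp only: ofr_simps)
  qed
  define u0 where "u0 = al * x0 + be * y0"
  define u1 where "u1 = al * x1 + be * y1"
  define u2 where "u2 = al * x2 + be * y2"
  define u3 where "u3 = al * x3 + be * y3"
  define v0 where "v0 = - cnj be * x0 + cnj al * y0"
  define v1 where "v1 = - cnj be * x1 + cnj al * y1"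
  define v2 where "v2 = - cnj be * x2 + cnj al * y2"
  define v3 where "v3 = - cnj be * x3 + cnj al * y3"
  define a' where "a' = qf u0 u1 u2 u3 u0 u1 u2 u3"
  define b' where "b' = qf u0 u1 u2 u3 v0 v1 v2 v3"
  define c' where "c' = qf v0 v1 v2 v3 v0 v1 v2 v3"
  define P0' where "P0' = (cmod u0)^2 + (cmod u1)^2 + (cmod u2)^2 + (cmod u3)^2"
  define P1' where "P1' = (cmod v0)^2 + (cmod v1)^2 + (cmod v2)^2 + (cmod v3)^2"
  define g' where "g' = u0 * cnj v0 + u1 * cnj v1 + u2 * cnj v2 + u3 * cnj v3"
  have A1: "a' = al^2*a + 2*al*be*b + be^2*c"
    unfolding a'_def a_def b_def c_def u0_def u1_def u2_def u3_def qf_def by (simp add: algebra_simps power2_eq_square)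
  have A2: "b' = - al * cnj be * a + (al * cnj al - be * cnj be) * b + be * cnj al * c"
    unfolding b'_def a_def b_def c_def u0_def u1_def u2_def u3_def v0_def v1_def v2_def v3_def qf_def
    by (simp add: algebra_simps)
  have A3: "c' = (cnj be)^2 * a - 2 * cnj al * cnj be * b + (cnj al)^2 * c"
    unfolding c'_def a_def b_def c_def v0_def v1_def v2_def v3_def qf_def by (simp add: algebra_simps power2_eq_square)
  have a'0: "a' = 0" using A1 h0 by simp
  have R1: "(cmod a')^2 + 2*(cmod b')^2 + (cmod c')^2 = (cmod a)^2 + 2*(cmod b)^2 + (cmod c)^2"
  proof -
    have "complex_of_real ((cmod a')^2 + 2*(cmod b')^2 + (cmod c')^2)
      = (al * cnj al + be * cnj be)^2 * complex_of_real ((cmod a)^2 + 2*(cmod b)^2 + (cmod c)^2)"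
      unfolding A1 A2 A3 ofr_simps cnj_simps by (simp add: algebra_simps power2_eq_square)
    thus ?thesis unfolding s1 by (simp only: power_one mult_1 of_real_eq_iff)
  qed
  have R2: "cmod (a' * c' - b'^2) = cmod (a * c - b^2)"
  proof -
    have "a' * c' - b'^2 = (al * cnj al + be * cnj be)^2 * (a * c - b^2)"
      unfolding A1 A2 A3 by (simp add: algebra_simps power2_eq_square)
    thus ?thesis unfolding s1 by simp
  qed
  define P0c where "P0c = complex_of_real P0"
  define P1c where "P1c = complex_of_real P1"
  have GA1: "complex_of_real P0' = al * cnj al * P0c + be * cnj be * P1c + al * cnj be * g + be * cnj al * cnj g"
    unfolding P0'_def P0c_def P1c_def P0_def P1_def g_def u0_def u1_def u2_def u3_def ofr_simps cnj_simps
    by (simp add: algebra_simps)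
  have GA2: "complex_of_real P1' = be * cnj be * P0c + al * cnj al * P1c - al * cnj be * g - be * cnj al * cnj g"
    unfolding P1'_def P0c_def P1c_def P0_def P1_def g_def v0_def v1_def v2_def v3_def ofr_simps cnj_simps
    by (simp add: algebra_simps)
  have GA3: "g' = - al * be * P0c + al * be * P1c + al^2 * g - be^2 * cnj g"
    unfolding g'_def P0c_def P1c_def P0_def P1_def g_def u0_def u1_def u2_def u3_def v0_def v1_def v2_def v3_def ofr_simps cnj_simps
    by (simp add: algebra_simps power2_eq_square)
  have cP0: "cnj P0c = P0c" and cP1: "cnj P1c = P1c" unfolding P0c_def P1c_def by simp_all
  have R3: "P0' + P1' = P0 + P1"
  proof -
    have "complex_of_real (P0' + P1') = (al * cnj al + be * cnj be) * complex_of_real (P0 + P1)"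
      unfolding of_real_add GA1 GA2 by (simp add: algebra_simps P0c_def P1c_def)
    thus ?thesis unfolding s1 by (simp only: mult_1 of_real_eq_iff)
  qed
  have R4: "P0' * P1' - (cmod g')^2 = P0 * P1 - (cmod g)^2"
  proof -
    have "complex_of_real (P0' * P1' - (cmod g')^2) = (al * cnj al + be * cnj be)^2 * complex_of_real (P0 * P1 - (cmod g)^2)"
      unfolding of_real_diff of_real_mult of_real_power ofr_cmod2 GA1 GA2 GA3
      by (simp add: cnj_simps cP0 cP1 flip: P0c_def P1c_def) (simp add: algebra_simps power2_eq_square)
    thus ?thesis unfolding s1 by (simp only: power_one mult_1 of_real_eq_iff)
  qed
  have R5: "cmod c' \<le> P1'" unfolding c'_def P1'_def by (rule qf_self_bound)
  have "4 * (P0 * P1 - (cmod g)^2) + (cmod a)^2 + 2 * (cmod b)^2 + (cmod c)^2 - 6 * cmod (a * c - b^2)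
      = 4 * (P0' * P1' - (cmod g')^2) + (cmod a')^2 + 2 * (cmod b')^2 + (cmod c')^2 - 6 * cmod (a' * c' - b'^2)"
    using R1 R2 R4 by simp
  also have "\<dots> = 4 * (P0' * P1' - (cmod g')^2) + (cmod c')^2 - 4 * (cmod b')^2"
    using a'0 by (simp add: norm_power)
  also have "\<dots> \<le> 4 * (P0' * P1') + P1'^2"
  proof -
    have "(cmod c')^2 \<le> P1'^2" using R5 by (intro power_mono) auto
    moreover have "0 \<le> (cmod b')^2" "0 \<le> (cmod g')^2" by simp_all
    moreover have "4 * (P0' * P1' - (cmod g')^2) = 4 * (P0' * P1') - 4 * (cmod g')^2" by (simp add: algebra_simps)
    ultimately show ?thesis by linarith
  qed
  also have "\<dots> \<le> 4/3 * (P0' + P1')^2"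
  proof -
    have "0 \<le> (2 * P0' - P1')^2" by simp
    thus ?thesis by (simp add: power2_eq_square algebra_simps)
  qed
  finally show ?thesis using R3 by simp
qed

definition DD :: "(nat \<Rightarrow> nat \<Rightarrow> complex) \<Rightarrow> complex" where
  "DD m = kq m 0 0 * kq m 1 1 - (kq m 0 1)^2"

lemma conc_XY:
  assumes "dim_vec psi = 8"
  shows "(concurrence (rhoAB psi))^2 = TT (mAB psi) - 2 * cmod (DD (mAB psi))"
    and "(concurrence (rhoAC psi))^2 = TT (mAC psi) - 2 * cmod (DD (mAC psi))"
    and "(concurrence (rhoBC psi))^2 = TT (mBC psi) - 2 * cmod (DD (mBC psi))"
  unfolding TT_def DD_def
  by (rule conc_sq[OF rhoAB_eq[OF assms]], rule conc_sq[OF rhoAC_eq[OF assms]], rule conc_sq[OF rhoBC_eq[OF assms]])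

lemma DD_eq: "DD (mAB psi) = DD (mBC psi)" "DD (mAC psi) = DD (mBC psi)"
proof -
  define z0 where "z0 = psi $ 0"
  define z1 where "z1 = psi $ 1"
  define z2 where "z2 = psi $ 2"
  define z3 where "z3 = psi $ 3"
  define z4 where "z4 = psi $ 4"
  define z5 where "z5 = psi $ 5"
  define z6 where "z6 = psi $ 6"
  define z7 where "z7 = psi $ 7"
  have z1': "psi $ Suc 0 = z1" by (simp add: z1_def)
  note zs = z0_def[symmetric] z1_def[symmetric] z2_def[symmetric] z3_def[symmetric] z4_def[symmetric]
    z5_def[symmetric] z6_def[symmetric] z7_def[symmetric] z1'
  show "DD (mAB psi) = DD (mBC psi)"
    unfolding DD_def kq_def mAB_def mBC_def
    by (simp add: numeral_3_eq_3[symmetric] numeral_2_eq_2[symmetric] zs) (simp add: algebra_simps power2_eq_square)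
  show "DD (mAC psi) = DD (mBC psi)"
    unfolding DD_def kq_def mAC_def mBC_def
    by (simp add: numeral_3_eq_3[symmetric] numeral_2_eq_2[symmetric] zs) (simp add: algebra_simps power2_eq_square)
qed

lemma K1: "TT (mAB psi) + TT (mAC psi) = 4 * (((cmod (psi$0))^2 + (cmod (psi$1))^2 + (cmod (psi$2))^2 + (cmod (psi$3))^2)
   * ((cmod (psi$4))^2 + (cmod (psi$5))^2 + (cmod (psi$6))^2 + (cmod (psi$7))^2)
   - (cmod (psi$0 * cnj (psi$4) + psi$1 * cnj (psi$5) + psi$2 * cnj (psi$6) + psi$3 * cnj (psi$7)))^2)"
proof -
  define z0 where "z0 = psi $ 0"
  define z1 where "z1 = psi $ 1"
  define z2 where "z2 = psi $ 2"
  define z3 where "z3 = psi $ 3"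
  define z4 where "z4 = psi $ 4"
  define z5 where "z5 = psi $ 5"
  define z6 where "z6 = psi $ 6"
  define z7 where "z7 = psi $ 7"
  have z1': "psi $ Suc 0 = z1" by (simp add: z1_def)
  note zs = z0_def[symmetric] z1_def[symmetric] z2_def[symmetric] z3_def[symmetric] z4_def[symmetric]
    z5_def[symmetric] z6_def[symmetric] z7_def[symmetric] z1'
  have "complex_of_real (TT (mAB psi) + TT (mAC psi)) = complex_of_real (4 * (((cmod (psi$0))^2 + (cmod (psi$1))^2 + (cmod (psi$2))^2 + (cmod (psi$3))^2)
   * ((cmod (psi$4))^2 + (cmod (psi$5))^2 + (cmod (psi$6))^2 + (cmod (psi$7))^2)
   - (cmod (psi$0 * cnj (psi$4) + psi$1 * cnj (psi$5) + psi$2 * cnj (psi$6) + psi$3 * cnj (psi$7)))^2))"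
    unfolding TT_def kq_def mAB_def mAC_def
    apply (simp add: numeral_3_eq_3[symmetric] numeral_2_eq_2[symmetric])
    apply (simp only: ofr_simps)
    apply (simp only: cnj_simps)
    apply (simp only: zs)
    apply (simp add: algebra_simps)
    done
  thus ?thesis by (simp only: of_real_eq_iff)
qed

lemma K2:
  "TT (mBC psi) = (cmod (qf (psi$0) (psi$1) (psi$2) (psi$3) (psi$0) (psi$1) (psi$2) (psi$3)))^2
     + 2 * (cmod (qf (psi$0) (psi$1) (psi$2) (psi$3) (psi$4) (psi$5) (psi$6) (psi$7)))^2
     + (cmod (qf (psi$4) (psi$5) (psi$6) (psi$7) (psi$4) (psi$5) (psi$6) (psi$7)))^2"
  "DD (mBC psi) = qf (psi$0) (psi$1) (psi$2) (psi$3) (psi$0) (psi$1) (psi$2) (psi$3)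
     * qf (psi$4) (psi$5) (psi$6) (psi$7) (psi$4) (psi$5) (psi$6) (psi$7)
     - (qf (psi$0) (psi$1) (psi$2) (psi$3) (psi$4) (psi$5) (psi$6) (psi$7))^2"
  unfolding TT_def DD_def kq_def mBC_def qf_def by (simp_all add: numeral_2_eq_2[symmetric] numeral_3_eq_3[symmetric])

lemma NN_split: "NN psi = ((cmod (psi$0))^2 + (cmod (psi$1))^2 + (cmod (psi$2))^2 + (cmod (psi$3))^2)
   + ((cmod (psi$4))^2 + (cmod (psi$5))^2 + (cmod (psi$6))^2 + (cmod (psi$7))^2)"
  unfolding NN_def by (simp add: set8)

lemma key_psi: "TT (mAB psi) + TT (mAC psi) + TT (mBC psi) - 6 * cmod (DD (mBC psi)) \<le> 4/3 * (NN psi)^2"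
  using key_abs[of "psi$0" "psi$1" "psi$2" "psi$3" "psi$4" "psi$5" "psi$6" "psi$7"]
  unfolding K1 K2 NN_split by simp

theorem theorem6:
  fixes psi :: "complex vec"
  assumes "is_pure_3qubit psi"
  shows "S_max_total psi + 3 * E_W psi \<le> 10 / 3"
proof -
  have dim: "dim_vec psi = 8" and N1: "NN psi = 1"
    using assms unfolding is_pure_3qubit_def NN_def by auto
  define D where "D = cmod (DD (mBC psi))"
  have cAB: "(concurrence (rhoAB psi))^2 = TT (mAB psi) - 2 * D"
    using conc_XY(1)[OF dim] DD_eq unfolding D_def by simp
  have cAC: "(concurrence (rhoAC psi))^2 = TT (mAC psi) - 2 * D"
    using conc_XY(2)[OF dim] DD_eq unfolding D_def by simp
  have cBC: "(concurrence (rhoBC psi))^2 = TT (mBC psi) - 2 * D"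
    using conc_XY(3)[OF dim] unfolding D_def by simp
  have sAB: "S_corr (rhoAB psi) = 1 + 2*TT (mAB psi) - TT (mAC psi) - TT (mBC psi)"
    using E1AB[OF dim] N1 by simp
  have sAC: "S_corr (rhoAC psi) = 1 + 2*TT (mAC psi) - TT (mAB psi) - TT (mBC psi)"
    using E1AC[OF dim] N1 by simp
  have sBC: "S_corr (rhoBC psi) = 1 + 2*TT (mBC psi) - TT (mAB psi) - TT (mAC psi)"
    using E1BC[OF dim] N1 by simp
  have key: "TT (mAB psi) + TT (mAC psi) + TT (mBC psi) - 6 * D \<le> 4/3"
    using key_psi[of psi] N1 unfolding D_def by simp
  define eAB where "eAB = (concurrence (rhoAB psi))^2"
  define eAC where "eAC = (concurrence (rhoAC psi))^2"
  define eBC where "eBC = (concurrence (rhoBC psi))^2"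
  have EW: "E_W psi = min eAB (min eAC eBC)"
    unfolding E_W_def eAB_def eAC_def eBC_def by simp
  have SM: "S_max_total psi = max (S_corr (rhoAB psi) + S_corr (rhoAC psi))
      (max (S_corr (rhoAB psi) + S_corr (rhoBC psi)) (S_corr (rhoAC psi) + S_corr (rhoBC psi)))"
    unfolding S_max_total_def Let_def by simp
  have "E_W psi \<le> eAB" "E_W psi \<le> eAC" "E_W psi \<le> eBC" unfolding EW by auto
  thus ?thesis unfolding SM using sAB sAC sBC key cAB cAC cBC
    unfolding eAB_def eAC_def eBC_def by (simp add: max_def)
qed

end
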